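(* Let $\mathfrak g$ be a real Lie algebra and $\mathfrak h\subset\mathfrak g$ a Lie subalgebra. Let $\mathfrak h^\perp:=\{f\in\mathfrak g^*\mid f(\mathfrak h)=0\}$, $r_{\mathfrak g,\mathfrak h}:=\min_{f\in\mathfrak h^\perp}\dim\mathfrak g_f$, and $\mathfrak h^\perp_{\min}:=\{f\in\mathfrak h^\perp\mid\dim\mathfrak g_f=r_{\mathfrak g,\mathfrak h}\}$. Then for every $f_0\in\mathfrak h^\perp_{\min}$ one has $[\mathfrak g_{f_0},\mathfrak g_{f_0}]\subset\mathfrak h_{f_0}$.
   Context: $\mathfrak g$ acts on $\mathfrak g^*$ by the coadjoint action; $\mathfrak g_f:=\{Y\in\mathfrak g\mid Yf=0\}$ is the stabilizer of $f$ in $\mathfrak g$ and $\mathfrak h_f:=\mathfrak g_f\cap\mathfrak h$. *)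

theory Defs
  imports "HOL-Analysis.Analysis"
begin

definition lie_algebra :: "('a::euclidean_space \<Rightarrow> 'a \<Rightarrow> 'a) \<Rightarrow> bool" where
  "lie_algebra br \<longleftrightarrow> bilinear br \<and> (\<forall>x. br x x = 0) \<and>
     (\<forall>x y z. br x (br y z) + br y (br z x) + br z (br x y) = 0)"

definition lie_subalgebra :: "('a::euclidean_space \<Rightarrow> 'a \<Rightarrow> 'a) \<Rightarrow> 'a set \<Rightarrow> bool" where
  "lie_subalgebra br h \<longleftrightarrow> subspace h \<and> (\<forall>x\<in>h. \<forall>y\<in>h. br x y \<in> h)"

definition coadj :: "('a::euclidean_space \<Rightarrow> 'a \<Rightarrow> 'a) \<Rightarrow> 'a \<Rightarrow> ('a \<Rightarrow> real) \<Rightarrow> ('a \<Rightarrow> real)" where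
  "coadj br Y f = (\<lambda>X. - f (br Y X))"

definition stab :: "('a::euclidean_space \<Rightarrow> 'a \<Rightarrow> 'a) \<Rightarrow> ('a \<Rightarrow> real) \<Rightarrow> 'a set" where
  "stab br f = {Y. coadj br Y f = (\<lambda>_. 0)}"

definition annih :: "'a::euclidean_space set \<Rightarrow> ('a \<Rightarrow> real) set" where
  "annih h = {f. linear f \<and> (\<forall>x\<in>h. f x = 0)}"

definition r_gh :: "('a::euclidean_space \<Rightarrow> 'a \<Rightarrow> 'a) \<Rightarrow> 'a set \<Rightarrow> nat" where
  "r_gh br h = Min ((\<lambda>f. dim (stab br f)) ` annih h)"

definition annih_min :: "('a::euclidean_space \<Rightarrow> 'a \<Rightarrow> 'a) \<Rightarrow> 'a set \<Rightarrow> ('a \<Rightarrow> real) set" where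
  "annih_min br h = {f \<in> annih h. dim (stab br f) = r_gh br h}"

end

theory Submission imports Defs begin

lemma bounded_below_on_W:
  fixes a :: "'a::euclidean_space \<Rightarrow> 'a"
  assumes la: "linear a" and W: "subspace W" and inj: "\<And>w. w \<in> W \<Longrightarrow> a w = 0 \<Longrightarrow> w = 0"
  obtains m where "m > 0" "\<And>w. w \<in> W \<Longrightarrow> m * norm w \<le> norm (a w)"
proof -
  let ?S = "W \<inter> sphere 0 1"
  have cS: "compact ?S"
    using closed_subspace[OF W] compact_sphere closed_Int_compact by blast
  show ?thesis
  proof (cases "?S = {}")
    case True
    have "w = 0" if "w \<in> W" for w
    proof (rule ccontr)
      assume "w \<noteq> 0"
      then have "w /\<^sub>R norm w \<in> ?S" using W that by (simp add: subspace_scale)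
      with True show False by blast
    qed
    then show ?thesis using that[of 1] linear_0[OF la] by force
  next
    case False
    have "continuous_on ?S (\<lambda>w. norm (a w))"
      using la by (intro continuous_intros linear_continuous_on) (simp add: linear_conv_bounded_linear)
    then obtain x0 where x0: "x0 \<in> ?S" and mn: "\<And>y. y \<in> ?S \<Longrightarrow> norm (a x0) \<le> norm (a y)"
      using continuous_attains_inf[OF cS False] by blast
    have "a x0 \<noteq> 0" using inj x0 by fastforce
    then have pos: "norm (a x0) > 0" by simp
    have "norm (a x0) * norm w \<le> norm (a w)" if "w \<in> W" for w
    proof (cases "w = 0")
      case True then show ?thesis using linear_0[OF la] by simp
    next
      case False
      then have "w /\<^sub>R norm w \<in> ?S" using W that by (simp add: subspace_scale)
      then have "norm (a x0) \<le> norm (a (w /\<^sub>R norm w))" by (rule mn)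
      also have "\<dots> = norm (a w) / norm w"
        using linear_scale[OF la] False by (simp add: field_simps)
      finally show ?thesis using False by (simp add: field_simps)
    qed
    then show ?thesis using that[OF pos] by blast
  qed
qed

lemma dimA:
  fixes a b :: "'a::euclidean_space \<Rightarrow> 'a" and q :: "'a \<Rightarrow> real"
  assumes la: "linear a" and lb: "linear b" and lq: "linear q" and aY: "a y = 0" and qY: "q y \<noteq> 0"
    and H: "\<And>t v. t \<noteq> 0 \<Longrightarrow> a v + t *\<^sub>R b v = 0 \<Longrightarrow> q v = 0"
  shows "\<exists>t. t \<noteq> 0 \<and> dim {v. a v + t *\<^sub>R b v = 0} < dim {v. a v = 0}"
proof -
  define K where "K = {v. a v = 0}"
  define W where "W = {w. \<forall>x\<in>K. orthogonal x w}"
  have sK: "subspace K" unfolding K_def using la by (simp add: linear_subspace_kernel)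
  have sW: "subspace W" unfolding W_def using subspace_orthogonal_comp[of K]
    by (simp add: orthogonal_comp_def)
  have dW: "dim W + dim K = DIM('a)"
    using dim_subspace_orthogonal_to_vectors[OF sK subspace_UNIV] unfolding W_def by simp
  have injW: "w = 0" if "w \<in> W" "a w = 0" for w
    using that unfolding W_def K_def orthogonal_def by auto
  obtain m where m: "m > 0" "\<And>w. w \<in> W \<Longrightarrow> m * norm w \<le> norm (a w)"
    using bounded_below_on_W[OF la sW injW] by blast
  obtain Bb where Bb: "Bb > 0" "\<And>x. norm (b x) \<le> Bb * norm x"
    using linear_bounded_pos[OF lb] by blast
  obtain Bq where Bq: "Bq > 0" "\<And>x. norm (q x) \<le> Bq * norm x"
    using linear_bounded_pos[OF lq] by blast
  define c where "c = q y"
  have c0: "c \<noteq> 0" using qY c_def by simp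
  have y0: "y \<noteq> 0" using qY linear_0[OF lq] by auto
  define M where "M = Bb * (1 + Bq * norm y / \<bar>c\<bar>)"
  have Mpos: "M > 0" unfolding M_def using Bb Bq c0 by (simp add: add_pos_nonneg)
  define t where "t = m / (2 * M)"
  have tpos: "t > 0" unfolding t_def using m Mpos by simp
  define Kt where "Kt = {v. a v + t *\<^sub>R b v = 0}"
  have sKt: "subspace Kt" unfolding Kt_def
    by (rule linear_subspace_kernel) (intro module_hom_add la module_hom_scale lb)
  define L where "L = span {y}"
  have sL: "subspace L" unfolding L_def by simp
  have dL: "dim L = 1" unfolding L_def using y0 by (simp add: dim_span)
  have WL: "W \<inter> L = {0}"
  proof -
    { fix z assume z: "z \<in> W" "z \<in> L"
      then obtain s where "z = s *\<^sub>R y" unfolding L_def by (auto simp: span_singleton)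
      then have "z \<in> K" using aY linear_scale[OF la] unfolding K_def by simp
      then have "z = 0" using z unfolding W_def orthogonal_def by auto }
    then show ?thesis using sW sL subspace_0 by blast
  qed
  define V where "V = {x + z |x z. x \<in> W \<and> z \<in> L}"
  have sV: "subspace V" unfolding V_def using subspace_sums[OF sW sL] by simp
  have dV: "dim V = dim W + 1"
    using dim_sums_Int[OF sW sL] WL dL unfolding V_def by simp
  have KV: "Kt \<inter> V = {0}"
  proof -
    { fix v assume v: "v \<in> Kt" "v \<in> V"
      then obtain w z where wz: "v = w + z" "w \<in> W" "z \<in> L" unfolding V_def by blast
      then obtain s where s: "z = s *\<^sub>R y" unfolding L_def by (auto simp: span_singleton)
      have av: "a v + t *\<^sub>R b v = 0" using v Kt_def by simp
      have "q v = 0" using H[OF _ av] tpos by simp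
      then have "q w + s * c = 0" using wz s linear_add[OF lq] linear_scale[OF lq] c_def by simp
      then have sv: "s = - q w / c" using c0 by (simp add: field_simps)
      have abs_s: "\<bar>s\<bar> \<le> Bq * norm w / \<bar>c\<bar>"
        using Bq(2)[of w] c0 by (simp add: sv abs_div divide_right_mono)
      have "a v = a w" using wz s aY linear_add[OF la] linear_scale[OF la] by simp
      then have aw: "a w = - t *\<^sub>R b v" using av by (simp add: eq_neg_iff_add_eq_0)
      have "norm (b v) \<le> Bb * norm v" by (rule Bb(2))
      also have "norm v \<le> norm w + \<bar>s\<bar> * norm y" using wz s norm_triangle_ineq[of w z] by simp
      also have "\<dots> \<le> norm w + Bq * norm w / \<bar>c\<bar> * norm y"
        using mult_right_mono[OF abs_s norm_ge_zero[of y]] by simp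
      finally have "norm (b v) \<le> Bb * (norm w + Bq * norm w / \<bar>c\<bar> * norm y)"
        using Bb(1) by (simp add: mult_left_mono)
      also have "\<dots> = M * norm w" unfolding M_def by (simp add: field_simps)
      finally have bv: "norm (b v) \<le> M * norm w" .
      have "m * norm w \<le> norm (a w)" using m(2) wz by simp
      also have "\<dots> = t * norm (b v)" using aw tpos by simp
      also have "\<dots> \<le> t * (M * norm w)" using bv tpos by (simp add: mult_left_mono)
      also have "\<dots> = m / 2 * norm w" unfolding t_def using Mpos by (simp add: field_simps)
      finally have "m / 2 * norm w \<le> 0" by linarith
      then have "norm w \<le> 0" using m(1) by (simp add: mult_le_0_iff)
      then have "norm w = 0" by simp
      then have "w = 0" by simp
      then have "s = 0" using sv linear_0[OF lq] by simp
      then have "v = 0" using wz s \<open>w = 0\<close> by simp }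
    then show ?thesis using sKt sV subspace_0 by blast
  qed
  have "dim {x + z |x z. x \<in> Kt \<and> z \<in> V} + dim (Kt \<inter> V) = dim Kt + dim V"
    by (rule dim_sums_Int[OF sKt sV])
  moreover have "dim {x + z |x z. x \<in> Kt \<and> z \<in> V} \<le> DIM('a)" by (rule dim_subset_UNIV)
  ultimately have "dim Kt < dim K" using KV dV dW by simp
  then show ?thesis using tpos unfolding Kt_def K_def by (intro exI[of _ t]) simp
qed

definition af :: "('a::euclidean_space \<Rightarrow> 'a \<Rightarrow> 'a) \<Rightarrow> ('a \<Rightarrow> real) \<Rightarrow> 'a \<Rightarrow> 'a" where
  "af br f w = (\<Sum>i\<in>Basis. f (br w i) *\<^sub>R i)"

lemma stab_char: "stab br f = {Y. \<forall>X. f (br Y X) = 0}"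
  unfolding stab_def coadj_def by (auto simp: fun_eq_iff)

lemma af_zero_iff:
  assumes lf: "linear f" and bl: "bilinear br"
  shows "af br f w = 0 \<longleftrightarrow> (\<forall>X. f (br w X) = 0)"
proof
  assume h: "af br f w = 0"
  have c: "f (br w i) = 0" if "i \<in> Basis" for i
  proof -
    have "af br f w \<bullet> i = f (br w i)" unfolding af_def using that
      by (simp add: inner_sum_left inner_Basis if_distrib cong: if_cong)
    then show ?thesis using h by simp
  qed
  have lin: "linear (\<lambda>X. f (br w X))"
    using bl lf unfolding bilinear_def by (auto intro: linear_compose[unfolded o_def])
  show "\<forall>X. f (br w X) = 0"
  proof
    fix X
    have "f (br w X) = f (br w (\<Sum>i\<in>Basis. (X \<bullet> i) *\<^sub>R i))" by (simp add: euclidean_representation)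
    also have "\<dots> = (\<Sum>i\<in>Basis. (X \<bullet> i) * f (br w i))"
      using linear_sum[OF lin, of "\<lambda>i. (X \<bullet> i) *\<^sub>R i" Basis] linear_scale[OF lin] by simp
    also have "\<dots> = 0" using c by simp
    finally show "f (br w X) = 0" .
  qed
next
  assume "\<forall>X. f (br w X) = 0"
  then show "af br f w = 0" unfolding af_def by simp
qed

lemma linear_af:
  assumes lf: "linear f" and bl: "bilinear br"
  shows "linear (af br f)"
proof -
  have L: "linear (\<lambda>w. f (br w i))" for i
    using bl lf unfolding bilinear_def by (auto intro: linear_compose[unfolded o_def])
  show ?thesis unfolding af_def
    by (rule linearI) (simp_all add: linear_add[OF L] linear_scale[OF L] scaleR_add_left sum.distrib scaleR_sum_right)
qed

lemma af_add:
  assumes "linear f" "linear l"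
  shows "af br (\<lambda>x. f x + t * l x) w = af br f w + t *\<^sub>R af br l w"
  unfolding af_def by (simp add: scaleR_add_left sum.distrib scaleR_sum_right)

lemma stab_af: "linear f \<Longrightarrow> bilinear br \<Longrightarrow> stab br f = {w. af br f w = 0}"
  by (simp add: stab_char af_zero_iff)

lemma lin_ft:
  fixes f l :: "'a::euclidean_space \<Rightarrow> real"
  assumes "linear f" "linear l" shows "linear (\<lambda>x. f x + t * l x)"
  using module_hom_add[OF assms(1) module_hom_scale[OF assms(2), of t]] by simp

theorem lemma2p12:
  fixes br :: "'a::euclidean_space \<Rightarrow> 'a \<Rightarrow> 'a" and h :: "'a set" and f0 :: "'a \<Rightarrow> real"
  assumes "lie_algebra br" and "lie_subalgebra br h" and "f0 \<in> annih_min br h"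
  shows "span {br X Y | X Y. X \<in> stab br f0 \<and> Y \<in> stab br f0} \<subseteq> stab br f0 \<inter> h"
proof -
  have bl: "bilinear br" and alt: "\<And>x. br x x = 0"
    and jac: "\<And>x y z. br x (br y z) + br y (br z x) + br z (br x y) = 0"
    using assms(1) unfolding lie_algebra_def by auto
  have sh: "subspace h" using assms(2) unfolding lie_subalgebra_def by auto
  have f0a: "f0 \<in> annih h" and f0d: "dim (stab br f0) = r_gh br h"
    using assms(3) unfolding annih_min_def by auto
  have lf0: "linear f0" and f0h: "\<And>x. x \<in> h \<Longrightarrow> f0 x = 0" using f0a unfolding annih_def by auto
  have linR: "linear (\<lambda>y. br x y)" for x using bl unfolding bilinear_def by auto
  have linL: "linear (\<lambda>x. br x y)" for y using bl unfolding bilinear_def by auto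
  have skew: "br x y = - br y x" for x y
  proof -
    have "br (x + y) (x + y) = 0" by (rule alt)
    then have "br x x + br x y + br y x + br y y = 0"
      using linear_add[OF linR] linear_add[OF linL] by (simp add: algebra_simps)
    then show ?thesis using alt by (simp add: eq_neg_iff_add_eq_0)
  qed
  define K where "K = stab br f0"
  have Kc: "K = {Y. \<forall>X. f0 (br Y X) = 0}" unfolding K_def stab_char ..
  have sK: "subspace K"
  proof -
    have "K = {w. af br f0 w = 0}" unfolding K_def using stab_af[OF lf0 bl] .
    then show ?thesis using linear_subspace_kernel[OF linear_af[OF lf0 bl]] by simp
  qed
  have clos: "br X Y \<in> K" if "X \<in> K" "Y \<in> K" for X Y
  proof -
    have "f0 (br (br X Y) Z) = 0" for Z
    proof -
      have "br (br X Y) Z = br X (br Y Z) + br Y (br Z X)"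
        using jac[of X Y Z] skew[of Z "br X Y"] by (simp add: algebra_simps eq_neg_iff_add_eq_0)
      then show ?thesis using that Kc linear_add[OF lf0] by simp
    qed
    then show ?thesis using Kc by simp
  qed
  have key: "l (br X Y) = 0" if l: "l \<in> annih h" and XY: "X \<in> K" "Y \<in> K" for l X Y
  proof (rule ccontr)
    assume ne: "l (br X Y) \<noteq> 0"
    have ll: "linear l" and lh: "\<And>x. x \<in> h \<Longrightarrow> l x = 0" using l unfolding annih_def by auto
    have lq: "linear (\<lambda>v. l (br v Y))" using linL ll by (auto intro: linear_compose[unfolded o_def])
    have H: "l (br v Y) = 0" if t0: "t \<noteq> 0" and v: "af br f0 v + t *\<^sub>R af br l v = 0" for t v
    proof -
      have "af br (\<lambda>x. f0 x + t * l x) v = 0" using v af_add[OF lf0 ll] by simp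
      moreover have "linear (\<lambda>x. f0 x + t * l x)" using lin_ft[OF lf0 ll] .
      ultimately have "f0 (br v Y) + t * l (br v Y) = 0" using af_zero_iff[OF _ bl] by blast
      moreover have "f0 (br v Y) = 0" using XY(2) Kc skew[of v Y] linear_neg[OF lf0] by simp
      ultimately show ?thesis using t0 by simp
    qed
    have aX: "af br f0 X = 0" using XY(1) stab_af[OF lf0 bl] K_def by simp
    have "\<exists>t. t \<noteq> 0 \<and> dim {v. af br f0 v + t *\<^sub>R af br l v = 0} < dim {v. af br f0 v = 0}"
      by (rule dimA[OF linear_af[OF lf0 bl] linear_af[OF ll bl] lq aX ne H])
    then obtain t where t: "t \<noteq> 0" and dt: "dim {v. af br f0 v + t *\<^sub>R af br l v = 0} < dim {v. af br f0 v = 0}"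
      by blast
    define ft where "ft = (\<lambda>x. f0 x + t * l x)"
    have lft: "linear ft" unfolding ft_def using lin_ft[OF lf0 ll] .
    have fta: "ft \<in> annih h" unfolding annih_def using lft f0h lh by (simp add: ft_def)
    have "stab br ft = {v. af br f0 v + t *\<^sub>R af br l v = 0}"
      using stab_af[OF lft bl] af_add[OF lf0 ll] unfolding ft_def by simp
    then have lt: "dim (stab br ft) < dim (stab br f0)" using dt stab_af[OF lf0 bl] by simp
    have fin: "finite ((\<lambda>f. dim (stab br f)) ` annih h)"
      by (rule finite_subset[of _ "{..DIM('a)}"]) (use dim_subset_UNIV in fastforce)+
    have "r_gh br h \<le> dim (stab br ft)" unfolding r_gh_def using fin fta by (intro Min_le) auto
    then show False using lt f0d by simp
  qed
  have inh: "br X Y \<in> h" if "X \<in> K" "Y \<in> K" for X Y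
  proof (rule ccontr)
    assume nh: "br X Y \<notin> h"
    obtain u z where uz: "br X Y = u + z" "u \<in> span h" "\<And>w. w \<in> span h \<Longrightarrow> orthogonal z w"
      using orthogonal_subspace_decomp_exists[of h "br X Y"] by blast
    have sph: "span h = h" using span_eq_iff[of h] sh by blast
    have z0: "z \<noteq> 0"
    proof
      assume "z = 0"
      then have "br X Y \<in> span h" using uz by simp
      then show False using nh sph by simp
    qed
    have lz: "linear (\<lambda>v. z \<bullet> v)" by (rule linearI) (simp_all add: inner_add_right)
    have "z \<bullet> x = 0" if "x \<in> h" for x using uz(3)[OF span_base[OF that]] by (simp add: orthogonal_def)
    then have "(\<lambda>v. z \<bullet> v) \<in> annih h" unfolding annih_def using lz by blast
    then have "z \<bullet> br X Y = 0" using key that by blast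
    moreover have "z \<bullet> u = 0" using uz(2,3) orthogonal_def by blast
    ultimately have "z \<bullet> z = 0" using uz(1) by (simp add: inner_add_right)
    then show False using z0 by simp
  qed
  have sub: "subspace (K \<inter> h)" using sK sh by (rule subspace_inter)
  show ?thesis unfolding K_def[symmetric]
    by (rule span_minimal[OF _ sub]) (auto intro: clos inh)
qed

end
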